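(* Let $A^1,\ldots,A^M\in\mathbb{R}^{m,n}$ be matrices whose columns have Euclidean norm $1$. If \[ M-2\sum_{1\le i<j\le M}\mathcal{M}_D(A^i,A^j)>0, \] then \[ \mathcal{M}\Bigl(\sum_{i=1}^M A^i\Bigr)\le\frac{\sum_{i=1}^M\mathcal{M}(A^i)+2\sum_{1\le i<j\le M}\mathcal{M}_{OD}(A^i,A^j)}{M-2\sum_{1\le i<j\le M}\mathcal{M}_D(A^i,A^j)}. \]
   Context: For $C=[c_1,\ldots,c_n]$ with columns of norm $1$, $\mathcal{M}(C)=\max_{i\ne j}|\langle c_i,c_j\rangle|$. For a matrix $C=[c_1,\ldots,c_n]$ with nonzero but not necessarily normalized columns (such as $\sum_i A^i$), $\mathcal{M}(C)$ means $\max_{i\ne j}\frac{|\langle c_i,c_j\rangle|}{\|c_i\|_2\|c_j\|_2}$. For $A=[a_1,\ldots,a_n]$, $B=[b_1,\ldots,b_n]$ with normalized columns, $\mathcal{M}_{OD}(A,B)=\max_{i\ne j}|\langle a_i,b_j\rangle|$ and $\mathcal{M}_D(A,B)=\max_i|\langle a_i,b_i\rangle|$. *)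

theory Defs
  imports "HOL-Analysis.Analysis"
begin

text \<open>Matrices in R^{m x n} are represented as real^'n^'m; the j-th column is column j A.
  Maxima over pairs i ~= j are taken together with 0 (harmless since all values are
  absolute values, and this makes the notions total when n = 1).\<close>

definition mutual_coherence :: "real^'n^'m \<Rightarrow> real" where
  "mutual_coherence C = Max (insert 0
     {\<bar>column i C \<bullet> column j C\<bar> / (norm (column i C) * norm (column j C)) | i j. i \<noteq> j})"

definition coherence_OD :: "real^'n^'m \<Rightarrow> real^'n^'m \<Rightarrow> real" where
  "coherence_OD A B = Max (insert 0 {\<bar>column i A \<bullet> column j B\<bar> | i j. i \<noteq> j})"

definition coherence_D :: "real^'n^'m \<Rightarrow> real^'n^'m \<Rightarrow> real" where
  "coherence_D A B = Max (insert 0 {\<bar>column i A \<bullet> column i B\<bar> | i. True})"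

end

theory Submission
  imports Defs
begin

lemma column_sum: "column j (sum A S) = (\<Sum>k\<in>S. column j (A k))"
  by (simp add: column_def vec_eq_iff)

lemma double_sum_split:
  fixes f :: "nat \<Rightarrow> nat \<Rightarrow> real"
  shows "(\<Sum>i\<in>{1..M}. \<Sum>j\<in>{1..M}. f i j) = (\<Sum>i\<in>{1..M}. f i i) + (\<Sum>i\<in>{1..M}. \<Sum>j\<in>{i<..M}. f i j + f j i)"
proof (induction M)
  case 0 then show ?case by simp
next
  case (Suc M)
  have e: "{1..Suc M} = insert (Suc M) {1..M}" by auto
  have e2: "\<And>i. i \<in> {1..M} \<Longrightarrow> {i<..Suc M} = insert (Suc M) {i<..M}" by auto
  have "(\<Sum>i\<in>{1..Suc M}. \<Sum>j\<in>{1..Suc M}. f i j)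
     = (\<Sum>i\<in>{1..M}. \<Sum>j\<in>{1..M}. f i j) + (\<Sum>i\<in>{1..M}. f i (Suc M)) + (\<Sum>j\<in>{1..M}. f (Suc M) j) + f (Suc M) (Suc M)"
    by (simp add: e sum.distrib)
  also have "\<dots> = (\<Sum>i\<in>{1..M}. f i i) + (\<Sum>i\<in>{1..M}. \<Sum>j\<in>{i<..M}. f i j + f j i) + (\<Sum>i\<in>{1..M}. f i (Suc M) + f (Suc M) i) + f (Suc M) (Suc M)"
    by (subst Suc.IH) (simp add: sum.distrib)
  also have "\<dots> = (\<Sum>i\<in>{1..Suc M}. f i i) + (\<Sum>i\<in>{1..Suc M}. \<Sum>j\<in>{i<..Suc M}. f i j + f j i)"
  proof -
    have "(\<Sum>i\<in>{1..Suc M}. \<Sum>j\<in>{i<..Suc M}. f i j + f j i) = (\<Sum>i\<in>{1..M}. \<Sum>j\<in>{i<..Suc M}. f i j + f j i)"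
      by (simp add: e)
    also have "\<dots> = (\<Sum>i\<in>{1..M}. (f i (Suc M) + f (Suc M) i) + (\<Sum>j\<in>{i<..M}. f i j + f j i))"
      by (rule sum.cong) (auto simp: e2)
    finally show ?thesis by (simp add: e sum.distrib)
  qed
  finally show ?case .
qed

lemma max_fin_ge:
  assumes "finite S" "x \<in> S" shows "x \<le> Max (insert (0::real) S)"
  using assms by (simp add: Max_ge_iff)

lemma mc_ge:
  fixes B :: "real^'n^'m"
  assumes "\<And>j. norm (column j B) = 1" "p \<noteq> q"
  shows "\<bar>column p B \<bullet> column q B\<bar> \<le> mutual_coherence B"
proof -
  let ?S = "{\<bar>column i B \<bullet> column j B\<bar> / (norm (column i B) * norm (column j B)) | i j. i \<noteq> j}"
  have "?S \<subseteq> (\<lambda>(i,j). \<bar>column i B \<bullet> column j B\<bar> / (norm (column i B) * norm (column j B))) ` UNIV" by auto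
  hence f: "finite ?S" by (rule finite_subset) simp
  have "\<bar>column p B \<bullet> column q B\<bar> = \<bar>column p B \<bullet> column q B\<bar> / (norm (column p B) * norm (column q B))"
    using assms by simp
  hence "\<bar>column p B \<bullet> column q B\<bar> \<in> ?S" using assms by blast
  thus ?thesis unfolding mutual_coherence_def using max_fin_ge[OF f] by blast
qed

lemma od_ge:
  fixes B C :: "real^'n^'m"
  assumes "p \<noteq> q"
  shows "\<bar>column p B \<bullet> column q C\<bar> \<le> coherence_OD B C"
proof -
  let ?S = "{\<bar>column i B \<bullet> column j C\<bar> | i j. i \<noteq> j}"
  have "?S \<subseteq> (\<lambda>(i,j). \<bar>column i B \<bullet> column j C\<bar>) ` UNIV" by auto
  hence f: "finite ?S" by (rule finite_subset) simp
  have "\<bar>column p B \<bullet> column q C\<bar> \<in> ?S" using assms by blast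
  thus ?thesis unfolding coherence_OD_def using max_fin_ge[OF f] by blast
qed

lemma d_ge:
  fixes B C :: "real^'n^'m"
  shows "\<bar>column p B \<bullet> column p C\<bar> \<le> coherence_D B C"
proof -
  let ?S = "{\<bar>column i B \<bullet> column i C\<bar> | i. True}"
  have "?S \<subseteq> (\<lambda>i. \<bar>column i B \<bullet> column i C\<bar>) ` UNIV" by auto
  hence f: "finite ?S" by (rule finite_subset) simp
  have "\<bar>column p B \<bullet> column p C\<bar> \<in> ?S" by blast
  thus ?thesis unfolding coherence_D_def using max_fin_ge[OF f] by blast
qed

theorem corollary4p6:
  fixes A :: "nat \<Rightarrow> real^'n^'m" and M :: nat
  assumes unit: "\<And>k j. k \<in> {1..M} \<Longrightarrow> norm (column j (A k)) = 1"
    and pos: "real M - 2 * (\<Sum>i\<in>{1..M}. \<Sum>j\<in>{i<..M}. coherence_D (A i) (A j)) > 0"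
  shows "mutual_coherence (\<Sum>k\<in>{1..M}. A k)
    \<le> ((\<Sum>k\<in>{1..M}. mutual_coherence (A k))
          + 2 * (\<Sum>i\<in>{1..M}. \<Sum>j\<in>{i<..M}. coherence_OD (A i) (A j)))
       / (real M - 2 * (\<Sum>i\<in>{1..M}. \<Sum>j\<in>{i<..M}. coherence_D (A i) (A j)))"
proof -
  define D where "D = real M - 2 * (\<Sum>i\<in>{1..M}. \<Sum>j\<in>{i<..M}. coherence_D (A i) (A j))"
  define N where "N = (\<Sum>k\<in>{1..M}. mutual_coherence (A k))
          + 2 * (\<Sum>i\<in>{1..M}. \<Sum>j\<in>{i<..M}. coherence_OD (A i) (A j))"
  define C where "C = (\<Sum>k\<in>{1..M}. A k)"
  have Dpos: "D > 0" using pos D_def by simp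
  have ip: "column p C \<bullet> column q C = (\<Sum>i\<in>{1..M}. column p (A i) \<bullet> column q (A i))
      + (\<Sum>i\<in>{1..M}. \<Sum>j\<in>{i<..M}. column p (A i) \<bullet> column q (A j) + column p (A j) \<bullet> column q (A i))" for p q
    unfolding C_def column_sum inner_sum_left inner_sum_right
    by (subst sum.swap, rule double_sum_split)
  have mc0: "mutual_coherence B \<ge> 0" for B :: "real^'n^'m"
    unfolding mutual_coherence_def
  proof -
    let ?S = "{\<bar>column i B \<bullet> column j B\<bar> / (norm (column i B) * norm (column j B)) | i j. i \<noteq> j}"
    have "?S \<subseteq> (\<lambda>(i,j). \<bar>column i B \<bullet> column j B\<bar> / (norm (column i B) * norm (column j B))) ` UNIV" by auto
    hence f: "finite ?S" by (rule finite_subset) simp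
    show "0 \<le> Max (insert 0 ?S)" using f by simp
  qed
  have od0: "coherence_OD B B' \<ge> 0" for B B' :: "real^'n^'m"
  proof -
    let ?S = "{\<bar>column i B \<bullet> column j B'\<bar> | i j. i \<noteq> j}"
    have "?S \<subseteq> (\<lambda>(i,j). \<bar>column i B \<bullet> column j B'\<bar>) ` UNIV" by auto
    hence f: "finite ?S" by (rule finite_subset) simp
    show ?thesis unfolding coherence_OD_def using f by simp
  qed
  have N0: "N \<ge> 0" unfolding N_def using mc0 od0
    by (intro add_nonneg_nonneg sum_nonneg mult_nonneg_nonneg) auto
  have num: "\<bar>column p C \<bullet> column q C\<bar> \<le> N" if "p \<noteq> q" for p q
  proof -
    have a: "\<bar>\<Sum>i\<in>{1..M}. column p (A i) \<bullet> column q (A i)\<bar> \<le> (\<Sum>k\<in>{1..M}. mutual_coherence (A k))"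
      by (rule order_trans[OF sum_abs sum_mono]) (use that in \<open>auto intro!: mc_ge unit\<close>)
    have b: "\<bar>\<Sum>i\<in>{1..M}. \<Sum>j\<in>{i<..M}. column p (A i) \<bullet> column q (A j) + column p (A j) \<bullet> column q (A i)\<bar>
       \<le> (\<Sum>i\<in>{1..M}. \<Sum>j\<in>{i<..M}. 2 * coherence_OD (A i) (A j))"
    proof (rule order_trans[OF sum_abs sum_mono], rule order_trans[OF sum_abs sum_mono])
      fix i j
      have "\<bar>column p (A j) \<bullet> column q (A i)\<bar> = \<bar>column q (A i) \<bullet> column p (A j)\<bar>" by (simp add: inner_commute)
      also have "\<dots> \<le> coherence_OD (A i) (A j)" using od_ge that by metis
      finally show "\<bar>column p (A i) \<bullet> column q (A j) + column p (A j) \<bullet> column q (A i)\<bar> \<le> 2 * coherence_OD (A i) (A j)"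
        using od_ge[OF that, of "A i" "A j"] by linarith
    qed
    have "\<bar>column p C \<bullet> column q C\<bar> \<le> (\<Sum>k\<in>{1..M}. mutual_coherence (A k)) + (\<Sum>i\<in>{1..M}. \<Sum>j\<in>{i<..M}. 2 * coherence_OD (A i) (A j))"
      unfolding ip using a b by linarith
    thus ?thesis unfolding N_def by (simp add: sum_distrib_left)
  qed
  have den: "norm (column p C) ^ 2 \<ge> D" for p
  proof -
    have a: "(\<Sum>i\<in>{1..M}. column p (A i) \<bullet> column p (A i)) = real M"
      using unit by (simp flip: power2_norm_eq_inner)
    have b: "(\<Sum>i\<in>{1..M}. \<Sum>j\<in>{i<..M}. column p (A i) \<bullet> column p (A j) + column p (A j) \<bullet> column p (A i))
       \<ge> (\<Sum>i\<in>{1..M}. \<Sum>j\<in>{i<..M}. - 2 * coherence_D (A i) (A j))"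
    proof (rule sum_mono, rule sum_mono)
      fix i j
      show "- 2 * coherence_D (A i) (A j) \<le> column p (A i) \<bullet> column p (A j) + column p (A j) \<bullet> column p (A i)"
        using d_ge[of p "A i" "A j"] by (simp add: inner_commute)
    qed
    have "norm (column p C) ^ 2 = column p C \<bullet> column p C" by (simp add: power2_norm_eq_inner)
    also have "\<dots> \<ge> D" unfolding ip a D_def using b by (simp add: sum_distrib_left sum_negf)
    finally show ?thesis .
  qed
  have nrm: "norm (column p C) \<ge> sqrt D" for p
    using den[of p] by (metis norm_ge_zero real_le_lsqrt real_sqrt_le_mono real_sqrt_pow2 Dpos less_imp_le sqrt_le_D)
  have prod: "norm (column p C) * norm (column q C) \<ge> D" for p q
  proof -
    have "D = sqrt D * sqrt D" using Dpos by simp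
    also have "\<dots> \<le> norm (column p C) * norm (column q C)"
      by (rule mult_mono[OF nrm nrm]) (use Dpos in auto)
    finally show ?thesis .
  qed
  let ?S = "{\<bar>column i C \<bullet> column j C\<bar> / (norm (column i C) * norm (column j C)) | i j. i \<noteq> j}"
  have "?S \<subseteq> (\<lambda>(i,j). \<bar>column i C \<bullet> column j C\<bar> / (norm (column i C) * norm (column j C))) ` UNIV" by auto
  hence f: "finite ?S" by (rule finite_subset) simp
  have "Max (insert 0 ?S) \<le> N / D"
  proof (rule Max.boundedI)
    show "finite (insert 0 ?S)" using f by simp
    show "insert 0 ?S \<noteq> {}" by simp
    fix x assume "x \<in> insert 0 ?S"
    then show "x \<le> N / D"
    proof
      assume "x = 0" thus ?thesis using N0 Dpos by simp
    next
      assume "x \<in> ?S"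
      then obtain p q where pq: "p \<noteq> q" and x: "x = \<bar>column p C \<bullet> column q C\<bar> / (norm (column p C) * norm (column q C))" by blast
      show ?thesis unfolding x
        by (rule frac_le[OF N0 num[OF pq] Dpos prod])
    qed
  qed
  hence "mutual_coherence C \<le> N / D" unfolding mutual_coherence_def .
  thus ?thesis unfolding C_def N_def D_def .
qed

end
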